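(* Let $\mathcal{F}\in\mathbb{C}^{q\times q}$ be the unitary discrete Fourier transform, with real and imaginary parts $\mathcal{F}_R,\mathcal{F}_I$, and let $\mathbf{M}\in\{0,1\}^{p\times q}$ be a masking (subsampling) operator whose rows are distinct rows of the $q\times q$ identity; the single-coil MRI forward operator is $\mathbf{A}=\mathbf{M}\mathcal{F}$. Define the real matrices $$\tilde{\mathbf{M}}=\begin{bmatrix}\mathbf{M}&\mathbf{0}\\\mathbf{0}&\mathbf{M}\end{bmatrix},\quad \tilde{\mathcal{F}}=\begin{bmatrix}\mathcal{F}_R&-\mathcal{F}_I\\\mathcal{F}_I&\mathcal{F}_R\end{bmatrix},\quad \tilde{\mathbf{A}}=\tilde{\mathbf{M}}\tilde{\mathcal{F}}\in\mathbb{R}^{2p\times 2q}.$$ Suppose the network outputs vectors in $\mathbb{R}^{2q}$ (real and imaginary parts stacked) and its neural tangent kernel $\tilde{\mathbf{W}}\in\mathbb{R}^{2q\times 2q}$ has the form $$\tilde{\mathbf{W}}=\tilde{\mathcal{F}}^T\tilde{\boldsymbol{\Lambda}}\tilde{\mathcal{F}},\qquad \tilde{\boldsymbol{\Lambda}}=\begin{bmatrix}\boldsymbol{\Lambda}&\mathbf{0}\\\mathbf{0}&\boldsymbol{\Lambda}\end{bmatrix},$$ with $\boldsymbol{\Lambda}\in\mathbb{R}^{q\times q}$ diagonal with diagonal entries $\lambda_1,\dots,\lambda_q$. Let $\mathbf{x}\in\mathbb{C}^q$ be the ground truth image and $\mathbf{y}=\mathbf{A}\mathbf{x}+\mathbf{n}$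 with $\mathbf{n}\in\mathbb{C}^p$ whose real and imaginary parts are independent $\mathcal{N}(\mathbf{0},\tfrac{\sigma^2}{2}\mathbf{I})$. Writing $\tilde{\mathbf{x}},\tilde{\mathbf{y}}$ for the stacked real and imaginary parts of $\mathbf{x},\mathbf{y}$, define the iterates $$\tilde{\mathbf{z}}_{t+1}=\tilde{\mathbf{z}}_t+\eta\,\tilde{\mathbf{W}}\left(\tilde{\mathbf{A}}^T\tilde{\mathbf{y}}-\tilde{\mathbf{A}}^T\tilde{\mathbf{A}}\tilde{\mathbf{z}}_t\right),\qquad\tilde{\mathbf{z}}_0=\mathbf{0}.$$ Then the mean squared error $\mathrm{MSE}_t:=\mathbb{E}_{\mathbf{n}}\|\tilde{\mathbf{z}}_t-\tilde{\mathbf{x}}\|_2^2$ at iteration $t$ is $$\mathrm{MSE}_t=\sum_{i=1}^q\left[(1-\eta\lambda_i m_i)^{2t}\,|(\mathcal{F}\mathbf{x})_i|^2+\sigma^2\left(1-(1-\eta\lambda_i m_i)^t\right)^2\right],$$ where $m_i$ is the $i$th diagonal entry of $\mathbf{M}^T\mathbf{M}$ and $(\mathcal{F}\mathbf{x})_i$ is the $i$th entry of $\mathcal{F}\mathbf{x}$.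
   Context: The recursion models gradient-descent training (step size $\eta>0$) of a deep image prior network with real weights and a two-channel (real/imaginary) output, with loss $\|\tilde{\mathbf{A}}f_\theta(\mathbf{z})-\tilde{\mathbf{y}}\|_2^2$, in the regime where the neural tangent kernel $\tilde{\mathbf{W}}$ stays fixed; $\tilde{\mathbf{z}}_t$ is the network output at iteration $t$. Applying $\tilde{\mathbf{A}}$ to a stacked real/imaginary vector is equivalent to applying $\mathbf{A}$ to the corresponding complex vector. *)

theory Defs
  imports "HOL-Probability.Probability"
begin

text \<open>Matrices are represented as functions nat => nat => real (or complex) with
  explicit dimensions; vectors as functions nat => real (or complex).\<close>

definition dft :: "nat \<Rightarrow> nat \<Rightarrow> nat \<Rightarrow> complex" where
  "dft q j k = cis (- 2 * pi * real j * real k / real q) / complex_of_real (sqrt (real q))"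

definition mmul :: "nat \<Rightarrow> (nat \<Rightarrow> nat \<Rightarrow> real) \<Rightarrow> (nat \<Rightarrow> nat \<Rightarrow> real) \<Rightarrow> nat \<Rightarrow> nat \<Rightarrow> real" where
  "mmul k A B i j = (\<Sum>l<k. A i l * B l j)"

definition mvec :: "nat \<Rightarrow> (nat \<Rightarrow> nat \<Rightarrow> real) \<Rightarrow> (nat \<Rightarrow> real) \<Rightarrow> nat \<Rightarrow> real" where
  "mvec k A v i = (\<Sum>j<k. A i j * v j)"

definition transp :: "(nat \<Rightarrow> nat \<Rightarrow> real) \<Rightarrow> nat \<Rightarrow> nat \<Rightarrow> real" where
  "transp A i j = A j i"

definition blk :: "nat \<Rightarrow> nat \<Rightarrow> (nat \<Rightarrow> nat \<Rightarrow> real) \<Rightarrow> nat \<Rightarrow> nat \<Rightarrow> real" where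
  "blk n m B i j = (if i < n \<and> j < m then B i j
                    else if n \<le> i \<and> m \<le> j then B (i - n) (j - m) else 0)"

definition stack :: "nat \<Rightarrow> (nat \<Rightarrow> complex) \<Rightarrow> nat \<Rightarrow> real" where
  "stack q v i = (if i < q then Re (v i) else Im (v (i - q)))"

definition Ftil :: "nat \<Rightarrow> nat \<Rightarrow> nat \<Rightarrow> real" where
  "Ftil q i j = (if i < q \<and> j < q then Re (dft q i j)
                 else if i < q then - Im (dft q i (j - q))
                 else if j < q then Im (dft q (i - q) j)
                 else Re (dft q (i - q) (j - q)))"

definition Atil :: "nat \<Rightarrow> nat \<Rightarrow> (nat \<Rightarrow> nat \<Rightarrow> real) \<Rightarrow> nat \<Rightarrow> nat \<Rightarrow> real" where
  "Atil p q M = mmul (2 * q) (blk p q M) (Ftil q)"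

definition Wtil :: "nat \<Rightarrow> (nat \<Rightarrow> real) \<Rightarrow> nat \<Rightarrow> nat \<Rightarrow> real" where
  "Wtil q lam = mmul (2 * q)
     (mmul (2 * q) (transp (Ftil q)) (blk q q (\<lambda>i j. if i = j then lam i else 0))) (Ftil q)"

fun ntk_iter :: "real \<Rightarrow> (nat \<Rightarrow> nat \<Rightarrow> real) \<Rightarrow> (nat \<Rightarrow> nat \<Rightarrow> real) \<Rightarrow> nat \<Rightarrow> nat
                 \<Rightarrow> (nat \<Rightarrow> real) \<Rightarrow> nat \<Rightarrow> nat \<Rightarrow> real" where
  "ntk_iter \<eta> W A m n y 0 = (\<lambda>i. 0)"
| "ntk_iter \<eta> W A m n y (Suc t) =
     (\<lambda>i. ntk_iter \<eta> W A m n y t i + \<eta> * mvec n W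
        (\<lambda>j. mvec m (transp A) y j
              - mvec m (transp A) (mvec n A (ntk_iter \<eta> W A m n y t)) j) i)"

definition fwd :: "nat \<Rightarrow> nat \<Rightarrow> (nat \<Rightarrow> nat \<Rightarrow> real) \<Rightarrow> (nat \<Rightarrow> complex) \<Rightarrow> nat \<Rightarrow> complex" where
  "fwd p q M x k = (\<Sum>j<q. (\<Sum>l<q. complex_of_real (M k l) * dft q l j) * x j)"

definition meas :: "nat \<Rightarrow> nat \<Rightarrow> (nat \<Rightarrow> nat \<Rightarrow> real) \<Rightarrow> (nat \<Rightarrow> complex)
                    \<Rightarrow> (nat \<Rightarrow> real) \<Rightarrow> (nat \<Rightarrow> real) \<Rightarrow> nat \<Rightarrow> complex" where
  "meas p q M x nr ni k = fwd p q M x k + Complex (nr k) (ni k)"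

text \<open>Law of one of the real vectors Re n, Im n: i.i.d. N(0, sigma^2/2) entries
  (normal_density takes the standard deviation).\<close>
definition noise_part :: "nat \<Rightarrow> real \<Rightarrow> (nat \<Rightarrow> real) measure" where
  "noise_part p \<sigma> = PiM {..<p} (\<lambda>_. density lborel (normal_density 0 (\<sigma> / sqrt 2)))"

definition MSE :: "nat \<Rightarrow> nat \<Rightarrow> (nat \<Rightarrow> nat \<Rightarrow> real) \<Rightarrow> (nat \<Rightarrow> real) \<Rightarrow> real \<Rightarrow> real
                   \<Rightarrow> (nat \<Rightarrow> complex) \<Rightarrow> nat \<Rightarrow> real" where
  "MSE p q M lam \<eta> \<sigma> x t =
     (\<integral>\<omega>. (\<Sum>i<2 * q.
        (ntk_iter \<eta> (Wtil q lam) (Atil p q M) (2 * p) (2 * q)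
            (stack p (meas p q M x (fst \<omega>) (snd \<omega>))) t i - stack q x i)\<^sup>2)
      \<partial>(noise_part p \<sigma> \<Otimes>\<^sub>M noise_part p \<sigma>))"

end

theory Submission
  imports Defs
begin


lemma sum_2q: "(\<Sum>l<2*(q::nat). f l) = (\<Sum>l<q. f l) + (\<Sum>l<q. f (l + q))"
proof -
  have "(\<Sum>l<2*q. f l) = sum f ({..<q} \<union> {q..<q+q})"
    by (rule sum.cong) auto
  also have "\<dots> = (\<Sum>l<q. f l) + (\<Sum>l\<in>{q..<q+q}. f l)"
    by (rule sum.union_disjoint) auto
  also have "(\<Sum>l\<in>{q..<q+q}. f l) = (\<Sum>l\<in>{0..<q}. f (l + q))"
    using sum.shift_bounds_nat_ivl[of f 0 q q] by simp
  finally show ?thesis by (simp add: atLeast0LessThan)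
qed

lemma dft_sym: "dft q j k = dft q k j"
  by (simp add: dft_def mult.commute mult.left_commute)

lemma cis_ne_1:
  fixes d :: int
  assumes "d \<noteq> 0" "\<bar>d\<bar> < int q"
  shows "cis (2 * pi * real_of_int d / real q) \<noteq> 1"
proof
  assume "cis (2 * pi * real_of_int d / real q) = 1"
  hence "cos (2 * pi * real_of_int d / real q) = 1" by (metis cis.sel(1) one_complex.sel(1))
  then obtain n :: int where n: "2 * pi * real_of_int d / real q = real_of_int n * 2 * pi"
    using cos_one_2pi_int by (metis of_int_mult of_int_numeral)
  have q0: "real q > 0" using assms by auto
  from n q0 have "real_of_int d = real_of_int n * real q"
    by (simp add: field_simps)
  hence dn: "d = n * int q" by (metis of_int_eq_iff of_int_mult of_int_of_nat_eq)
  show False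
  proof (cases "n = 0")
    case True then show ?thesis using dn assms by simp
  next
    case False
    hence "\<bar>n\<bar> \<ge> 1" by simp
    hence "\<bar>n * int q\<bar> \<ge> int q" by (simp add: abs_mult mult_le_cancel_right1)
    then show ?thesis using dn assms by simp
  qed
qed

lemma dft_orth:
  assumes "i < q" "j < q"
  shows "(\<Sum>l<q. dft q i l * cnj (dft q j l)) = (if i = j then 1 else 0)"
proof -
  define w where "w = cis (2 * pi * (real j - real i) / real q)"
  have q0: "real q > 0" using assms by auto
  have trm: "dft q i l * cnj (dft q j l) = w ^ l / of_real (real q)" for l
  proof -
    have "dft q i l * cnj (dft q j l) = cis (- 2 * pi * real i * real l / real q) * cis (2 * pi * real j * real l / real q) / (of_real (sqrt (real q)) * of_real (sqrt (real q)))"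
      by (simp add: dft_def cis_cnj)
    also have "of_real (sqrt (real q)) * of_real (sqrt (real q)) = (of_real (real q) :: complex)"
      by (subst of_real_mult[symmetric]) simp
    also have "cis (- 2 * pi * real i * real l / real q) * cis (2 * pi * real j * real l / real q) = w ^ l"
    proof -
      have eq: "- 2 * pi * real i * real l / real q + 2 * pi * real j * real l / real q = real l * (2 * pi * (real j - real i) / real q)"
        using q0 by (simp add: field_simps)
      show ?thesis unfolding w_def cis_mult eq by (rule Complex.DeMoivre[symmetric])
    qed
    finally show ?thesis .
  qed
  have "(\<Sum>l<q. dft q i l * cnj (dft q j l)) = (\<Sum>l<q. w ^ l) / of_real (real q)"
    by (simp add: trm sum_divide_distrib)
  also have "\<dots> = (if i = j then 1 else 0)"
  proof (cases "i = j")
    case True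
    then show ?thesis using q0 by (simp add: w_def)
  next
    case False
    have wne: "w \<noteq> 1" unfolding w_def
      using cis_ne_1[of "int j - int i" q] False assms by simp
    have "w ^ q = cis (real q * (2 * pi * (real j - real i) / real q))"
      unfolding w_def by (rule Complex.DeMoivre)
    also have "real q * (2 * pi * (real j - real i) / real q) = 2 * pi * real_of_int (int j - int i)"
      using q0 by simp
    finally have "w ^ q = cis (2 * pi * real_of_int (int j - int i))" .
    also have "\<dots> = 1" by (metis Ints_of_int cis_multiple_2pi mult.assoc)
    finally have "w ^ q = 1" .
    then show ?thesis using False wne by (simp add: geometric_sum)
  qed
  finally show ?thesis .
qed



lemma mvec_mmul: "mvec n (mmul k A B) v i = mvec k A (mvec n B v) i"
proof -
  have "mvec n (mmul k A B) v i = (\<Sum>j<n. \<Sum>l<k. A i l * B l j * v j)"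
    by (simp add: mvec_def mmul_def sum_distrib_right)
  also have "\<dots> = (\<Sum>l<k. \<Sum>j<n. A i l * B l j * v j)" by (rule sum.swap)
  also have "\<dots> = mvec k A (mvec n B v) i"
    by (simp add: mvec_def sum_distrib_left mult.assoc)
  finally show ?thesis .
qed

lemma transp_mmul: "transp (mmul k A B) = mmul k (transp B) (transp A)"
  by (auto simp: fun_eq_iff transp_def mmul_def mult.commute)

lemma mvec_cong: "(\<And>j. j < n \<Longrightarrow> u j = v j) \<Longrightarrow> mvec n A u i = mvec n A v i"
  by (simp add: mvec_def)

lemma mvec_add: "mvec n A (\<lambda>j. u j + v j) i = mvec n A u i + mvec n A v i"
  by (simp add: mvec_def distrib_left sum.distrib)

lemma mvec_diff: "mvec n A (\<lambda>j. u j - v j) i = mvec n A u i - mvec n A v i"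
  by (simp add: mvec_def right_diff_distrib sum_subtractf)

lemma mvec_scale: "mvec n A (\<lambda>j. c * u j) i = c * mvec n A u i"
  by (simp add: mvec_def sum_distrib_left mult.left_commute)

lemma dft_R:
  assumes "a < q" "b < q"
  shows "(\<Sum>l<q. Re (dft q a l) * Re (dft q b l) + Im (dft q a l) * Im (dft q b l)) = (if a = b then 1 else 0)"
proof -
  have "Re (\<Sum>l<q. dft q a l * cnj (dft q b l)) = (if a = b then 1 else 0)"
    using dft_orth[OF assms] by simp
  then show ?thesis by (simp add: Re_sum)
qed

lemma dft_I:
  assumes "a < q" "b < q"
  shows "(\<Sum>l<q. Im (dft q a l) * Re (dft q b l) - Re (dft q a l) * Im (dft q b l)) = 0"
proof -
  have "Im (\<Sum>l<q. dft q a l * cnj (dft q b l)) = 0"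
    using dft_orth[OF assms] by simp
  then show ?thesis by (simp add: Im_sum)
qed

lemma Ftil_rows:
  assumes "i < 2*q" "j < 2*q"
  shows "(\<Sum>l<2*q. Ftil q i l * Ftil q j l) = (if i = j then 1 else 0)"
proof -
  have S: "(\<Sum>l<2*q. Ftil q i l * Ftil q j l) = (\<Sum>l<q. Ftil q i l * Ftil q j l + Ftil q i (l+q) * Ftil q j (l+q))"
    by (simp add: sum_2q sum.distrib)
  show ?thesis
  proof (cases "i < q")
    case iq: True
    show ?thesis
    proof (cases "j < q")
      case True
      then show ?thesis using iq S dft_R[of i q j] by (simp add: Ftil_def)
    next
      case False
      then obtain b where b: "j = b + q" "b < q" using assms
        by (metis add.commute le_Suc_ex mult_2 nat_add_left_cancel_less not_le)
      have "(\<Sum>l<q. Ftil q i l * Ftil q j l + Ftil q i (l+q) * Ftil q j (l+q)) = - (\<Sum>l<q. Im (dft q i l) * Re (dft q b l) - Re (dft q i l) * Im (dft q b l))"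
        using iq b by (simp add: Ftil_def sum_negf[symmetric] algebra_simps)
      then show ?thesis using S dft_I[of i q b] iq b by simp
    qed
  next
    case iq: False
    then obtain a where a: "i = a + q" "a < q" using assms
      by (metis add.commute le_Suc_ex mult_2 nat_add_left_cancel_less not_le)
    show ?thesis
    proof (cases "j < q")
      case True
      have "(\<Sum>l<q. Ftil q i l * Ftil q j l + Ftil q i (l+q) * Ftil q j (l+q)) = (\<Sum>l<q. Im (dft q a l) * Re (dft q j l) - Re (dft q a l) * Im (dft q j l))"
        using True a by (simp add: Ftil_def algebra_simps)
      then show ?thesis using S dft_I[of a q j] True a by simp
    next
      case False
      then obtain b where b: "j = b + q" "b < q" using assms
        by (metis add.commute le_Suc_ex mult_2 nat_add_left_cancel_less not_le)
      have "(\<Sum>l<q. Ftil q i l * Ftil q j l + Ftil q i (l+q) * Ftil q j (l+q)) = (\<Sum>l<q. Re (dft q a l) * Re (dft q b l) + Im (dft q a l) * Im (dft q b l))"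
        using a b by (simp add: Ftil_def algebra_simps)
      then show ?thesis using S dft_R[of a q b] a b by simp
    qed
  qed
qed

definition sgnq :: "nat \<Rightarrow> nat \<Rightarrow> real" where "sgnq q i = (if i < q then 1 else -1)"

lemma Ftil_transp:
  assumes "i < 2*q" "l < 2*q"
  shows "Ftil q l i = sgnq q i * sgnq q l * Ftil q i l"
  using assms by (auto simp: Ftil_def sgnq_def dft_sym)

lemma Ftil_cols:
  assumes "i < 2*q" "j < 2*q"
  shows "(\<Sum>l<2*q. Ftil q l i * Ftil q l j) = (if i = j then 1 else 0)"
proof -
  have "(\<Sum>l<2*q. Ftil q l i * Ftil q l j) = (\<Sum>l<2*q. (sgnq q i * sgnq q j) * (Ftil q i l * Ftil q j l))"
  proof (rule sum.cong)
    fix l assume "l \<in> {..<2*q}"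
    then have l: "l < 2*q" by simp
    have ss: "sgnq q l * sgnq q l = 1" by (simp add: sgnq_def)
    show "Ftil q l i * Ftil q l j = (sgnq q i * sgnq q j) * (Ftil q i l * Ftil q j l)"
      using Ftil_transp[OF assms(1) l] Ftil_transp[OF assms(2) l] ss
      by (simp add: algebra_simps)
  qed simp
  also have "\<dots> = (sgnq q i * sgnq q j) * (if i = j then 1 else 0)"
    by (simp add: sum_distrib_left[symmetric] Ftil_rows[OF assms])
  also have "\<dots> = (if i = j then 1 else 0)" by (simp add: sgnq_def)
  finally show ?thesis .
qed

lemma orth_inv:
  fixes G :: "nat \<Rightarrow> nat \<Rightarrow> real" and u :: "nat \<Rightarrow> real"
  assumes orth: "\<And>i j. i < n \<Longrightarrow> j < n \<Longrightarrow> (\<Sum>l<n. G i l * G j l) = (if i = j then 1 else 0)"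
    and i: "i < n"
  shows "(\<Sum>l<n. G i l * (\<Sum>j<n. G j l * u j)) = u i"
proof -
  have "(\<Sum>l<n. G i l * (\<Sum>j<n. G j l * u j)) = (\<Sum>l<n. \<Sum>j<n. G i l * G j l * u j)"
    unfolding sum_distrib_left by (simp add: mult.assoc)
  also have "\<dots> = (\<Sum>j<n. \<Sum>l<n. G i l * G j l * u j)" by (rule sum.swap)
  also have "\<dots> = (\<Sum>j<n. (if i = j then u j else 0))"
    by (rule sum.cong) (simp_all add: orth i sum_distrib_right[symmetric])
  also have "\<dots> = u i" using i by simp
  finally show ?thesis .
qed

lemma FFt: "i < 2*q \<Longrightarrow> mvec (2*q) (Ftil q) (mvec (2*q) (transp (Ftil q)) u) i = u i"
  unfolding mvec_def transp_def using orth_inv[of "2*q" "Ftil q" i u] Ftil_rows by blast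

lemma FtF: "i < 2*q \<Longrightarrow> mvec (2*q) (transp (Ftil q)) (mvec (2*q) (Ftil q) u) i = u i"
  unfolding mvec_def transp_def using orth_inv[of "2*q" "\<lambda>a b. Ftil q b a" i u] Ftil_cols by blast

lemma norm_pres:
  "(\<Sum>i<2*q. (mvec (2*q) (Ftil q) u i)\<^sup>2) = (\<Sum>i<2*q. (u i)\<^sup>2)"
proof -
  let ?n = "2*q" and ?F = "Ftil q"
  have "(\<Sum>i<?n. (mvec ?n ?F u i)\<^sup>2) = (\<Sum>i<?n. \<Sum>j<?n. \<Sum>k<?n. ?F i j * ?F i k * (u j * u k))"
    by (simp add: mvec_def power2_eq_square sum_product algebra_simps)
  also have "\<dots> = (\<Sum>j<?n. \<Sum>i<?n. \<Sum>k<?n. ?F i j * ?F i k * (u j * u k))" by (rule sum.swap)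
  also have "\<dots> = (\<Sum>j<?n. \<Sum>k<?n. \<Sum>i<?n. ?F i j * ?F i k * (u j * u k))"
    by (rule sum.cong[OF refl], rule sum.swap)
  also have "\<dots> = (\<Sum>j<?n. \<Sum>k<?n. (if j = k then u j * u k else 0))"
    by (intro sum.cong refl) (simp add: sum_distrib_right[symmetric] Ftil_cols)
  also have "\<dots> = (\<Sum>j<?n. (u j)\<^sup>2)"
    by (simp add: power2_eq_square)
  finally show ?thesis .
qed



lemma blk_mvec:
  "mvec (2*q) (blk p q B) v k = (if k < p then mvec q B v k else mvec q B (\<lambda>j. v (j+q)) (k-p))"
  by (auto simp: mvec_def sum_2q blk_def)

lemma blk_mvec_t:
  "mvec (2*p) (transp (blk p q B)) w i = (if i < q then mvec p (transp B) w i else mvec p (transp B) (\<lambda>k. w (k+p)) (i-q))"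
  by (auto simp: mvec_def sum_2q blk_def transp_def)

locale mask =
  fixes p q :: nat and M :: "nat \<Rightarrow> nat \<Rightarrow> real" and r :: "nat \<Rightarrow> nat"
  assumes inj: "inj_on r {..<p}" and rq: "\<And>k. k < p \<Longrightarrow> r k < q"
    and Mr: "\<And>k j. k < p \<Longrightarrow> j < q \<Longrightarrow> M k j = (if j = r k then 1 else 0)"
begin

definition mm :: "nat \<Rightarrow> real" where "mm i = (\<Sum>k<p. M k i * M k i)"

lemma mM: assumes "i < q" shows "mvec p (transp M) (mvec q M v) i = mm i * v i"
proof -
  have "mvec p (transp M) (mvec q M v) i = (\<Sum>k<p. M k i * v (r k))"
  proof (unfold mvec_def transp_def, rule sum.cong[OF refl])
    fix k assume "k \<in> {..<p}"
    then have k: "k < p" by simp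
    have "(\<Sum>j<q. M k j * v j) = (\<Sum>j<q. if j = r k then v j else 0)"
      by (rule sum.cong) (simp_all add: Mr k)
    also have "\<dots> = v (r k)" using rq[OF k] by (simp add: sum.delta')
    finally show "M k i * (\<Sum>j<q. M k j * v j) = M k i * v (r k)" by simp
  qed
  also have "\<dots> = (\<Sum>k<p. M k i * M k i * v i)"
    by (rule sum.cong) (simp_all add: Mr assms)
  also have "\<dots> = mm i * v i" by (simp add: mm_def sum_distrib_right)
  finally show ?thesis .
qed

lemma mm_cases:
  assumes "i < q"
  shows "(\<exists>k0<p. mm i = 1 \<and> (\<forall>k<p. M k i = (if k = k0 then 1 else 0)))
         \<or> (mm i = 0 \<and> (\<forall>k<p. M k i = 0))"
proof (cases "\<exists>k0<p. r k0 = i")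
  case True
  then obtain k0 where k0: "k0 < p" "r k0 = i" by blast
  have Mk: "\<forall>k<p. M k i = (if k = k0 then 1 else 0)"
    using k0 inj assms by (auto simp: Mr inj_on_def)
  have "mm i = (\<Sum>k<p. if k = k0 then 1 else 0)"
    unfolding mm_def by (rule sum.cong) (simp_all add: Mk)
  also have "\<dots> = 1" using k0 by (simp add: sum.delta)
  finally show ?thesis using Mk k0 by blast
next
  case False
  then have "\<forall>k<p. M k i = 0" using assms by (auto simp: Mr)
  then show ?thesis by (simp add: mm_def)
qed

lemma mm01: "i < q \<Longrightarrow> mm i = 0 \<or> mm i = 1"
  using mm_cases by blast

lemma mm0: "i < q \<Longrightarrow> mm i = 0 \<Longrightarrow> k < p \<Longrightarrow> M k i = 0"
  using mm_cases by fastforce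

end

definition Dx :: "nat \<Rightarrow> (nat \<Rightarrow> complex) \<Rightarrow> nat \<Rightarrow> complex" where
  "Dx q x i = (\<Sum>j<q. dft q i j * x j)"

lemma Ftil_stack:
  "i < 2*q \<Longrightarrow> mvec (2*q) (Ftil q) (stack q x) i = stack q (Dx q x) i"
  by (auto simp: mvec_def sum_2q Ftil_def stack_def Dx_def Re_sum Im_sum sum.distrib[symmetric] intro!: sum.cong)

lemma fwd_stack:
  "stack p (fwd p q M x) k = mvec (2*q) (blk p q M) (stack q (Dx q x)) k"
proof -
  have f: "fwd p q M x k = (\<Sum>l<q. complex_of_real (M k l) * Dx q x l)" for k
  proof -
    have "fwd p q M x k = (\<Sum>j<q. \<Sum>l<q. complex_of_real (M k l) * dft q l j * x j)"
      by (simp add: fwd_def sum_distrib_right)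
    also have "\<dots> = (\<Sum>l<q. \<Sum>j<q. complex_of_real (M k l) * dft q l j * x j)" by (rule sum.swap)
    also have "\<dots> = (\<Sum>l<q. complex_of_real (M k l) * Dx q x l)"
      by (simp add: Dx_def sum_distrib_left mult.assoc)
    finally show ?thesis .
  qed
  show ?thesis
    unfolding blk_mvec by (simp add: stack_def f Re_sum Im_sum mvec_def)
qed



lemma diag_mvec: "i < q \<Longrightarrow> mvec q (\<lambda>i j. if i = j then lam i else (0::real)) v i = lam i * v i"
proof -
  assume i: "i < q"
  have "mvec q (\<lambda>i j. if i = j then lam i else (0::real)) v i = (\<Sum>j<q. if i = j then lam i * v j else 0)"
    unfolding mvec_def by (rule sum.cong) auto
  then show ?thesis using i by simp
qed

context mask
begin

definition hh :: "nat \<Rightarrow> nat" where "hh i = (if i < q then i else i - q)"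

lemma hh_lt: "i < 2*q \<Longrightarrow> hh i < q" by (auto simp: hh_def)

lemma MtM: assumes i: "i < 2*q"
  shows "mvec (2*p) (transp (blk p q M)) (mvec (2*q) (blk p q M) v) i = mm (hh i) * v i"
proof (cases "i < q")
  case True
  have "mvec (2*p) (transp (blk p q M)) (mvec (2*q) (blk p q M) v) i
        = mvec p (transp M) (mvec (2*q) (blk p q M) v) i" using True by (simp add: blk_mvec_t)
  also have "\<dots> = mvec p (transp M) (mvec q M v) i"
    by (rule mvec_cong) (simp add: blk_mvec)
  also have "\<dots> = mm (hh i) * v i" using True by (simp add: mM hh_def)
  finally show ?thesis .
next
  case False
  have "mvec (2*p) (transp (blk p q M)) (mvec (2*q) (blk p q M) v) i
        = mvec p (transp M) (\<lambda>k. mvec (2*q) (blk p q M) v (k+p)) (i-q)" using False by (simp add: blk_mvec_t)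
  also have "\<dots> = mvec p (transp M) (mvec q M (\<lambda>j. v (j+q))) (i-q)"
    by (rule mvec_cong) (simp add: blk_mvec)
  also have "\<dots> = mm (i - q) * v (i - q + q)" by (rule mM) (use False i in simp)
  also have "i - q + q = i" using False by simp
  also have "i - q = hh i" using False by (simp add: hh_def)
  finally show ?thesis .
qed

lemma Lam_mvec: assumes i: "i < 2*q"
  shows "mvec (2*q) (blk q q (\<lambda>i j. if i = j then lam i else 0)) v i = lam (hh i) * v i"
  using i by (auto simp: blk_mvec diag_mvec hh_def)

lemma g_zero: assumes i: "i < 2*q" and m0: "mm (hh i) = 0"
  shows "mvec (2*p) (transp (blk p q M)) y i = 0"
proof -
  have M0: "\<And>k. k < p \<Longrightarrow> M k (hh i) = 0" using mm0 hh_lt[OF i] m0 by blast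
  show ?thesis using M0 unfolding blk_mvec_t by (auto simp: mvec_def transp_def hh_def)
qed

lemma g_mm: "i < 2*q \<Longrightarrow> mm (hh i) * mvec (2*p) (transp (blk p q M)) y i = mvec (2*p) (transp (blk p q M)) y i"
  using mm01[OF hh_lt] g_zero by fastforce

abbreviation "zz \<eta> lam y t \<equiv> ntk_iter \<eta> (Wtil q lam) (Atil p q M) (2*p) (2*q) y t"

lemma FA: "i < 2*q \<Longrightarrow> mvec (2*q) (Ftil q) (mvec (2*p) (transp (Atil p q M)) w) i
   = mvec (2*p) (transp (blk p q M)) w i"
proof -
  assume i: "i < 2*q"
  have "mvec (2*p) (transp (Atil p q M)) w = mvec (2*q) (transp (Ftil q)) (mvec (2*p) (transp (blk p q M)) w)"
    by (auto simp: fun_eq_iff Atil_def transp_mmul mvec_mmul)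
  then show ?thesis using FFt[OF i] by simp
qed

lemma FW: "i < 2*q \<Longrightarrow> mvec (2*q) (Ftil q) (mvec (2*q) (Wtil q lam) d) i
   = lam (hh i) * mvec (2*q) (Ftil q) d i"
proof -
  assume i: "i < 2*q"
  have "mvec (2*q) (Wtil q lam) d = mvec (2*q) (transp (Ftil q)) (mvec (2*q) (blk q q (\<lambda>i j. if i = j then lam i else 0)) (mvec (2*q) (Ftil q) d))"
    by (auto simp: fun_eq_iff Wtil_def mvec_mmul)
  then show ?thesis using FFt[OF i] Lam_mvec[OF i] by simp
qed

lemma zh_rec: assumes i: "i < 2*q"
  shows "mvec (2*q) (Ftil q) (zz \<eta> lam y (Suc t)) i
    = mvec (2*q) (Ftil q) (zz \<eta> lam y t) i + \<eta> * lam (hh i) *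
      (mvec (2*p) (transp (blk p q M)) y i - mm (hh i) * mvec (2*q) (Ftil q) (zz \<eta> lam y t) i)"
proof -
  let ?A = "Atil p q M" and ?F = "Ftil q" and ?B = "blk p q M"
  define d where "d = (\<lambda>j. mvec (2*p) (transp ?A) y j - mvec (2*p) (transp ?A) (mvec (2*q) ?A (zz \<eta> lam y t)) j)"
  have z: "zz \<eta> lam y (Suc t) = (\<lambda>i. zz \<eta> lam y t i + \<eta> * mvec (2*q) (Wtil q lam) d i)"
    by (simp add: d_def)
  have "mvec (2*q) ?F (zz \<eta> lam y (Suc t)) i = mvec (2*q) ?F (zz \<eta> lam y t) i + \<eta> * mvec (2*q) ?F (mvec (2*q) (Wtil q lam) d) i"
    unfolding z mvec_add mvec_scale ..
  also have "mvec (2*q) ?F (mvec (2*q) (Wtil q lam) d) i = lam (hh i) * mvec (2*q) ?F d i"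
    by (rule FW[OF i])
  also have "mvec (2*q) ?F d i = mvec (2*p) (transp ?B) y i - mvec (2*p) (transp ?B) (mvec (2*q) ?A (zz \<eta> lam y t)) i"
    unfolding d_def mvec_diff FA[OF i] ..
  also have "mvec (2*q) ?A (zz \<eta> lam y t) = mvec (2*q) ?B (mvec (2*q) ?F (zz \<eta> lam y t))"
    by (auto simp: fun_eq_iff Atil_def mvec_mmul)
  also have "mvec (2*p) (transp ?B) (mvec (2*q) ?B (mvec (2*q) ?F (zz \<eta> lam y t))) i = mm (hh i) * mvec (2*q) ?F (zz \<eta> lam y t) i"
    by (rule MtM[OF i])
  finally show ?thesis by (simp add: mult.assoc)
qed

lemma zh_closed: assumes i: "i < 2*q"
  shows "mvec (2*q) (Ftil q) (zz \<eta> lam y t) i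
    = (1 - (1 - \<eta> * lam (hh i) * mm (hh i)) ^ t) * mvec (2*p) (transp (blk p q M)) y i"
proof (induction t)
  case 0
  then show ?case by (simp add: mvec_def)
next
  case (Suc t)
  let ?g = "mvec (2*p) (transp (blk p q M)) y i" and ?c = "1 - \<eta> * lam (hh i) * mm (hh i)"
  have gm: "mm (hh i) * ?g = ?g" by (rule g_mm[OF i])
  have "mvec (2*q) (Ftil q) (zz \<eta> lam y (Suc t)) i = (1 - ?c ^ t) * ?g + \<eta> * lam (hh i) * (?g - mm (hh i) * ((1 - ?c ^ t) * ?g))"
    using zh_rec[OF i] Suc by simp
  also have "\<dots> = (1 - ?c ^ t) * ?g + \<eta> * lam (hh i) * (?c ^ t * (mm (hh i) * ?g))"
    using gm by (simp add: algebra_simps)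
  also have "\<dots> = (1 - ?c ^ Suc t) * ?g"
    using gm by (simp add: algebra_simps)
  finally show ?case .
qed

end


lemma distr_pair_snd':
  assumes "prob_space M1" "sigma_finite_measure M2"
  shows "distr (M1 \<Otimes>\<^sub>M M2) M2 snd = M2"
proof (intro measure_eqI)
  interpret P: pair_sigma_finite M1 M2
    using assms by (simp add: pair_sigma_finite_def prob_space_imp_sigma_finite)
  fix A assume A: "A \<in> sets (distr (M1 \<Otimes>\<^sub>M M2) M2 snd)"
  from A have "emeasure (distr (M1 \<Otimes>\<^sub>M M2) M2 snd) A = emeasure (M1 \<Otimes>\<^sub>M M2) (space M1 \<times> A)"
    by (auto simp add: emeasure_distr space_pair_measure dest: sets.sets_into_space intro!: arg_cong2[where f=emeasure])
  moreover have "emeasure (M1 \<Otimes>\<^sub>M M2) (space M1 \<times> A) = emeasure M1 (space M1) * emeasure M2 A"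
    by (rule sigma_finite_measure.emeasure_pair_measure_Times[OF assms(2)]) (use A in auto)
  ultimately show "emeasure (distr (M1 \<Otimes>\<^sub>M M2) M2 snd) A = emeasure M2 A"
    using assms(1) by (simp add: prob_space.emeasure_space_1)
qed simp

lemma normal_sq_moment:
  assumes s: "s > 0"
  shows "has_bochner_integral lborel (\<lambda>v. normal_density 0 s v *\<^sub>R (a + b * v)\<^sup>2) (a\<^sup>2 + b\<^sup>2 * s\<^sup>2)"
proof -
  have h0: "has_bochner_integral lborel (\<lambda>v. normal_density 0 s v) 1"
    using integrable_normal_density[OF s, of 0] integral_normal_density[OF s, of 0]
    by (simp add: has_bochner_integral_iff)
  have h1: "has_bochner_integral lborel (\<lambda>v. normal_density 0 s v * v) 0"
    using normal_moment_nz_1[OF s, of 0] .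
  have h2: "has_bochner_integral lborel (\<lambda>v. normal_density 0 s v * v\<^sup>2) (s\<^sup>2)"
  proof -
    have eq: "(\<lambda>v. normal_density 0 s v * v\<^sup>2) = (\<lambda>x. x * (x * normal_density 0 s x))"
      by (auto simp: fun_eq_iff power2_eq_square)
    show ?thesis unfolding eq using normal_moment_even[OF s, of 0 1] by (simp add: field_simps)
  qed
  have "has_bochner_integral lborel (\<lambda>v. a\<^sup>2 * normal_density 0 s v + (2*a*b) * (normal_density 0 s v * v) + b\<^sup>2 * (normal_density 0 s v * v\<^sup>2))
          (a\<^sup>2 * 1 + (2*a*b) * 0 + b\<^sup>2 * s\<^sup>2)"
    by (intro has_bochner_integral_add has_bochner_integral_mult_right h0 h1 h2)
  then show ?thesis
    by (simp add: power2_eq_square algebra_simps)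
qed

lemma coord_sq:
  fixes \<sigma> :: real and p k :: nat
  assumes sig: "\<sigma> > 0" and k: "k < p"
    and X: "X = (\<lambda>\<omega>. fst \<omega> k) \<or> X = (\<lambda>\<omega>. snd \<omega> k)"
  shows "has_bochner_integral (noise_part p \<sigma> \<Otimes>\<^sub>M noise_part p \<sigma>) (\<lambda>\<omega>. (a + b * X \<omega>)\<^sup>2) (a\<^sup>2 + b\<^sup>2 * (\<sigma>\<^sup>2 / 2))"
proof -
  define s where "s = \<sigma> / sqrt 2"
  have s: "s > 0" using sig by (simp add: s_def)
  have s2: "s\<^sup>2 = \<sigma>\<^sup>2 / 2" by (simp add: s_def power_divide)
  define G where "G = density lborel (normal_density 0 s)"
  define N where "N = noise_part p \<sigma>"
  have N: "N = PiM {..<p} (\<lambda>_. G)" by (simp add: N_def G_def noise_part_def s_def)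
  have pG: "prob_space G" unfolding G_def by (rule prob_space_normal_density[OF s])
  have pN: "prob_space N" unfolding N by (rule prob_space_PiM) (simp add: pG)
  have sG: "sets G = sets borel" by (simp add: G_def)
  have comp: "distr N G (\<lambda>f. f k) = G"
    unfolding N using distr_PiM_component[of "{..<p}" "\<lambda>_. G" k] pG k by simp
  have mcomp: "(\<lambda>f. f k) \<in> measurable N G"
    unfolding N using k by (simp add: measurable_component_singleton)
  have dfst: "distr (N \<Otimes>\<^sub>M N) N fst = N" by (rule prob_space.distr_pair_fst[OF pN])
  have dsnd: "distr (N \<Otimes>\<^sub>M N) N snd = N"
    by (rule distr_pair_snd'[OF pN]) (simp add: pN prob_space_imp_sigma_finite)
  have mX: "X \<in> measurable (N \<Otimes>\<^sub>M N) G" and dX: "distr (N \<Otimes>\<^sub>M N) G X = G"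
  proof -
    { fix T :: "((nat \<Rightarrow> real) \<times> (nat \<Rightarrow> real)) \<Rightarrow> (nat \<Rightarrow> real)"
      assume T: "T \<in> measurable (N \<Otimes>\<^sub>M N) N" "distr (N \<Otimes>\<^sub>M N) N T = N" "X = (\<lambda>\<omega>. T \<omega> k)"
      have "X \<in> measurable (N \<Otimes>\<^sub>M N) G" using T mcomp by (simp add: measurable_compose[OF T(1) mcomp])
      moreover have "distr (N \<Otimes>\<^sub>M N) G X = G"
      proof -
        have "distr (N \<Otimes>\<^sub>M N) G X = distr (distr (N \<Otimes>\<^sub>M N) N T) G (\<lambda>f. f k)"
          using distr_distr[OF mcomp T(1)] T(3) by (simp add: comp_def)
        then show ?thesis using T(2) comp by simp
      qed
      ultimately have "X \<in> measurable (N \<Otimes>\<^sub>M N) G \<and> distr (N \<Otimes>\<^sub>M N) G X = G" by blast }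
    note * = this
    have "X \<in> measurable (N \<Otimes>\<^sub>M N) G \<and> distr (N \<Otimes>\<^sub>M N) G X = G"
      using X
    proof
      assume "X = (\<lambda>\<omega>. fst \<omega> k)" then show ?thesis using * [of fst] dfst by simp
    next
      assume "X = (\<lambda>\<omega>. snd \<omega> k)" then show ?thesis using * [of snd] dsnd by simp
    qed
    then show "X \<in> measurable (N \<Otimes>\<^sub>M N) G" "distr (N \<Otimes>\<^sub>M N) G X = G" by auto
  qed
  have mf: "(\<lambda>v::real. (a + b * v)\<^sup>2) \<in> borel_measurable G"
    by (simp add: measurable_cong_sets[OF sG refl])
  have hG: "has_bochner_integral G (\<lambda>v. (a + b * v)\<^sup>2) (a\<^sup>2 + b\<^sup>2 * s\<^sup>2)"
    unfolding G_def by (rule has_bochner_integral_density) (use normal_sq_moment[OF s, of a b] in auto)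
  hence "has_bochner_integral (distr (N \<Otimes>\<^sub>M N) G X) (\<lambda>v. (a + b * v)\<^sup>2) (a\<^sup>2 + b\<^sup>2 * s\<^sup>2)"
    using dX by simp
  hence "has_bochner_integral (N \<Otimes>\<^sub>M N) (\<lambda>\<omega>. (a + b * X \<omega>)\<^sup>2) (a\<^sup>2 + b\<^sup>2 * s\<^sup>2)"
    using mX mf by (simp add: has_bochner_integral_iff integrable_distr_eq integral_distr)
  then show ?thesis by (simp add: N_def s2)
qed



context mask
begin

definition CC :: "real \<Rightarrow> (nat \<Rightarrow> real) \<Rightarrow> nat \<Rightarrow> real" where
  "CC \<eta> lam i = 1 - \<eta> * lam i * mm i"

lemma g_decomp:
  assumes i: "i < 2*q"
  shows "mvec (2*p) (transp (blk p q M)) (stack p (meas p q M x nr ni)) i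
     = mm (hh i) * stack q (Dx q x) i + mvec (2*p) (transp (blk p q M)) (stack p (\<lambda>k. Complex (nr k) (ni k))) i"
proof -
  have y: "stack p (meas p q M x nr ni) = (\<lambda>k. mvec (2*q) (blk p q M) (stack q (Dx q x)) k + stack p (\<lambda>k. Complex (nr k) (ni k)) k)"
    by (auto simp: fun_eq_iff fwd_stack[symmetric] stack_def meas_def)
  show ?thesis unfolding y mvec_add MtM[OF i] ..
qed

lemma err:
  assumes i: "i < 2*q"
  shows "mvec (2*q) (Ftil q) (zz \<eta> lam (stack p (meas p q M x nr ni)) t) i - stack q (Dx q x) i
    = - (CC \<eta> lam (hh i) ^ t) * stack q (Dx q x) i + (1 - CC \<eta> lam (hh i) ^ t) * mvec (2*p) (transp (blk p q M)) (stack p (\<lambda>k. Complex (nr k) (ni k))) i"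
proof -
  let ?c = "CC \<eta> lam (hh i)" and ?m = "mm (hh i)" and ?xh = "stack q (Dx q x) i"
    and ?nu = "mvec (2*p) (transp (blk p q M)) (stack p (\<lambda>k. Complex (nr k) (ni k))) i"
  have e1: "mvec (2*q) (Ftil q) (zz \<eta> lam (stack p (meas p q M x nr ni)) t) i - ?xh
       = (1 - ?c ^ t) * (?m * ?xh + ?nu) - ?xh"
    unfolding zh_closed[OF i] g_decomp[OF i] CC_def ..
  have h: "(1 - ?c ^ t) * ?m = 1 - ?c ^ t"
    using mm01[OF hh_lt[OF i]] by (auto simp: CC_def)
  note e1
  also have "(1 - ?c ^ t) * (?m * ?xh + ?nu) - ?xh = ((1 - ?c ^ t) * ?m) * ?xh + (1 - ?c ^ t) * ?nu - ?xh"
    by (simp only: distrib_left mult.assoc)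
  also have "\<dots> = (1 - ?c ^ t) * ?xh + (1 - ?c ^ t) * ?nu - ?xh" by (simp only: h)
  also have "\<dots> = - (?c ^ t) * ?xh + (1 - ?c ^ t) * ?nu" by (simp add: algebra_simps)
  finally show ?thesis .
qed

lemma integrand_eq:
  "(\<Sum>i<2*q. (zz \<eta> lam (stack p (meas p q M x nr ni)) t i - stack q x i)\<^sup>2)
   = (\<Sum>i<q. (- (CC \<eta> lam i ^ t) * Re (Dx q x i) + (1 - CC \<eta> lam i ^ t) * (\<Sum>k<p. M k i * nr k))\<^sup>2
           + (- (CC \<eta> lam i ^ t) * Im (Dx q x i) + (1 - CC \<eta> lam i ^ t) * (\<Sum>k<p. M k i * ni k))\<^sup>2)"
proof -
  let ?z = "zz \<eta> lam (stack p (meas p q M x nr ni)) t"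
  let ?nu = "mvec (2*p) (transp (blk p q M)) (stack p (\<lambda>k. Complex (nr k) (ni k)))"
  have "(\<Sum>i<2*q. (?z i - stack q x i)\<^sup>2) = (\<Sum>i<2*q. (mvec (2*q) (Ftil q) (\<lambda>j. ?z j - stack q x j) i)\<^sup>2)"
    by (rule norm_pres[symmetric])
  also have "\<dots> = (\<Sum>i<2*q. (- (CC \<eta> lam (hh i) ^ t) * stack q (Dx q x) i + (1 - CC \<eta> lam (hh i) ^ t) * ?nu i)\<^sup>2)"
  proof (rule sum.cong[OF refl])
    fix i assume "i \<in> {..<2*q}"
    then have i: "i < 2*q" by simp
    show "(mvec (2*q) (Ftil q) (\<lambda>j. ?z j - stack q x j) i)\<^sup>2 = (- (CC \<eta> lam (hh i) ^ t) * stack q (Dx q x) i + (1 - CC \<eta> lam (hh i) ^ t) * ?nu i)\<^sup>2"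
      unfolding mvec_diff Ftil_stack[OF i] err[OF i] ..
  qed
  also have "\<dots> = (\<Sum>i<q. (- (CC \<eta> lam i ^ t) * Re (Dx q x i) + (1 - CC \<eta> lam i ^ t) * (\<Sum>k<p. M k i * nr k))\<^sup>2
           + (- (CC \<eta> lam i ^ t) * Im (Dx q x i) + (1 - CC \<eta> lam i ^ t) * (\<Sum>k<p. M k i * ni k))\<^sup>2)"
  proof -
    have nu1: "?nu i = (\<Sum>k<p. M k i * nr k)" if "i < q" for i
    proof -
      have "?nu i = mvec p (transp M) (stack p (\<lambda>k. Complex (nr k) (ni k))) i"
        using that by (simp add: blk_mvec_t)
      also have "\<dots> = (\<Sum>k<p. M k i * nr k)"
        unfolding mvec_def transp_def by (rule sum.cong) (auto simp: stack_def)
      finally show ?thesis .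
    qed
    have nu2: "?nu (i + q) = (\<Sum>k<p. M k i * ni k)" if "i < q" for i
    proof -
      have "?nu (i + q) = mvec p (transp M) (\<lambda>k. stack p (\<lambda>k. Complex (nr k) (ni k)) (k + p)) i"
        using that by (simp add: blk_mvec_t)
      also have "\<dots> = (\<Sum>k<p. M k i * ni k)"
        unfolding mvec_def transp_def by (rule sum.cong) (auto simp: stack_def)
      finally show ?thesis .
    qed
    show ?thesis
      unfolding sum_2q sum.distrib[symmetric]
      by (rule sum.cong[OF refl]) (simp add: nu1 nu2 hh_def stack_def)
  qed
  finally show ?thesis .
qed

end


lemma noise_prob: "\<sigma> > 0 \<Longrightarrow> prob_space (noise_part p \<sigma> \<Otimes>\<^sub>M noise_part p \<sigma>)"
  unfolding noise_part_def
  by (intro prob_space_pair prob_space_PiM prob_space_normal_density) auto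

lemma const_int: "prob_space P \<Longrightarrow> has_bochner_integral P (\<lambda>_. c::real) c"
proof -
  assume "prob_space P"
  then interpret prob_space P .
  show ?thesis by (simp add: has_bochner_integral_iff prob_space)
qed

context mask
begin

lemma one_freq:
  assumes sig: "\<sigma> > 0" and j: "j < q" and X: "X = fst \<or> X = snd"
  shows "has_bochner_integral (noise_part p \<sigma> \<Otimes>\<^sub>M noise_part p \<sigma>)
           (\<lambda>\<omega>. (a + b * (\<Sum>k<p. M k j * X \<omega> k))\<^sup>2) (a\<^sup>2 + b\<^sup>2 * mm j * (\<sigma>\<^sup>2 / 2))"
  using mm_cases[OF j]
proof
  assume "\<exists>k0<p. mm j = 1 \<and> (\<forall>k<p. M k j = (if k = k0 then 1 else 0))"
  then obtain k0 where k0: "k0 < p" "mm j = 1" "\<forall>k<p. M k j = (if k = k0 then 1 else 0)" by blast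
  have s: "(\<Sum>k<p. M k j * X \<omega> k) = X \<omega> k0" for \<omega>
  proof -
    have "(\<Sum>k<p. M k j * X \<omega> k) = (\<Sum>k<p. if k = k0 then X \<omega> k else 0)"
      by (rule sum.cong) (simp_all add: k0)
    then show ?thesis using k0 by simp
  qed
  have "has_bochner_integral (noise_part p \<sigma> \<Otimes>\<^sub>M noise_part p \<sigma>)
           (\<lambda>\<omega>. (a + b * X \<omega> k0)\<^sup>2) (a\<^sup>2 + b\<^sup>2 * (\<sigma>\<^sup>2 / 2))"
    by (rule coord_sq[OF sig k0(1)]) (use X in auto)
  then show ?thesis unfolding s k0(2) by simp
next
  assume "mm j = 0 \<and> (\<forall>k<p. M k j = 0)"
  then show ?thesis using const_int[OF noise_prob[OF sig], where c="a\<^sup>2"] by simp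
qed

end

theorem corollary1:
  fixes p q :: nat and M :: "nat \<Rightarrow> nat \<Rightarrow> real" and lam :: "nat \<Rightarrow> real"
    and \<eta> \<sigma> :: real and x :: "nat \<Rightarrow> complex" and t :: nat
  assumes mask: "\<exists>r. inj_on r {..<p} \<and> (\<forall>k<p. r k < q)
                   \<and> (\<forall>k<p. \<forall>j<q. M k j = (if j = r k then 1 else 0))"
    and eta: "\<eta> > 0"
    and sigma: "\<sigma> > 0"
  shows "MSE p q M lam \<eta> \<sigma> x t =
    (\<Sum>i<q. (1 - \<eta> * lam i * (\<Sum>k<p. M k i * M k i)) ^ (2 * t)
                 * (cmod (\<Sum>j<q. dft q i j * x j))\<^sup>2
           + \<sigma>\<^sup>2 * (1 - (1 - \<eta> * lam i * (\<Sum>k<p. M k i * M k i)) ^ t)\<^sup>2)"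
proof -
  obtain r where r: "inj_on r {..<p}" "\<forall>k<p. r k < q" "\<forall>k<p. \<forall>j<q. M k j = (if j = r k then 1 else 0)"
    using mask by blast
  interpret mask p q M r by unfold_locales (use r in auto)
  let ?P = "noise_part p \<sigma> \<Otimes>\<^sub>M noise_part p \<sigma>"
  let ?c = "\<lambda>i. CC \<eta> lam i ^ t"
  have H: "has_bochner_integral ?P
     (\<lambda>\<omega>. \<Sum>i<q. (- ?c i * Re (Dx q x i) + (1 - ?c i) * (\<Sum>k<p. M k i * fst \<omega> k))\<^sup>2
               + (- ?c i * Im (Dx q x i) + (1 - ?c i) * (\<Sum>k<p. M k i * snd \<omega> k))\<^sup>2)
     (\<Sum>i<q. ((- ?c i * Re (Dx q x i))\<^sup>2 + (1 - ?c i)\<^sup>2 * mm i * (\<sigma>\<^sup>2 / 2))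
               + ((- ?c i * Im (Dx q x i))\<^sup>2 + (1 - ?c i)\<^sup>2 * mm i * (\<sigma>\<^sup>2 / 2)))"
    by (intro has_bochner_integral_sum has_bochner_integral_add one_freq[OF sigma]) auto
  have "MSE p q M lam \<eta> \<sigma> x t = integral\<^sup>L ?P
     (\<lambda>\<omega>. \<Sum>i<q. (- ?c i * Re (Dx q x i) + (1 - ?c i) * (\<Sum>k<p. M k i * fst \<omega> k))\<^sup>2
               + (- ?c i * Im (Dx q x i) + (1 - ?c i) * (\<Sum>k<p. M k i * snd \<omega> k))\<^sup>2)"
    unfolding MSE_def integrand_eq ..
  also have "\<dots> = (\<Sum>i<q. ((- ?c i * Re (Dx q x i))\<^sup>2 + (1 - ?c i)\<^sup>2 * mm i * (\<sigma>\<^sup>2 / 2))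
               + ((- ?c i * Im (Dx q x i))\<^sup>2 + (1 - ?c i)\<^sup>2 * mm i * (\<sigma>\<^sup>2 / 2)))"
    using H by (rule has_bochner_integral_integral_eq)
  also have "\<dots> = (\<Sum>i<q. (1 - \<eta> * lam i * (\<Sum>k<p. M k i * M k i)) ^ (2 * t)
                 * (cmod (\<Sum>j<q. dft q i j * x j))\<^sup>2
           + \<sigma>\<^sup>2 * (1 - (1 - \<eta> * lam i * (\<Sum>k<p. M k i * M k i)) ^ t)\<^sup>2)"
  proof (rule sum.cong[OF refl])
    fix i assume "i \<in> {..<q}"
    then have i: "i < q" by simp
    have cm: "(cmod (Dx q x i))\<^sup>2 = (Re (Dx q x i))\<^sup>2 + (Im (Dx q x i))\<^sup>2" by (rule cmod_power2)
    have mmb: "(1 - ?c i)\<^sup>2 * mm i = (1 - ?c i)\<^sup>2"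
      using mm01[OF i] by (auto simp: CC_def)
    have pw: "CC \<eta> lam i ^ (2 * t) = (?c i)\<^sup>2" by (simp add: power_mult mult.commute power_even_eq)
    show "((- ?c i * Re (Dx q x i))\<^sup>2 + (1 - ?c i)\<^sup>2 * mm i * (\<sigma>\<^sup>2 / 2))
               + ((- ?c i * Im (Dx q x i))\<^sup>2 + (1 - ?c i)\<^sup>2 * mm i * (\<sigma>\<^sup>2 / 2))
        = (1 - \<eta> * lam i * (\<Sum>k<p. M k i * M k i)) ^ (2 * t)
                 * (cmod (\<Sum>j<q. dft q i j * x j))\<^sup>2
           + \<sigma>\<^sup>2 * (1 - (1 - \<eta> * lam i * (\<Sum>k<p. M k i * M k i)) ^ t)\<^sup>2"
      unfolding mm_def[symmetric] CC_def[symmetric] Dx_def[symmetric] pw cm mmb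
      by (simp add: power_mult_distrib algebra_simps)
  qed
  finally show ?thesis .
qed


end
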